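(* Let $p$ be an odd prime, $n,k$ positive integers, $d=\frac{p^k+1}{2}$ and $F(x)=x^d$ on $\mathrm{GF}(p^n)$. Then $F$ is perfect $c$-nonlinear for $c=-1$ if and only if $\frac{k}{\gcd(k,n)}$ is even.
   Context: For a function $F:\mathrm{GF}(p^n)\to\mathrm{GF}(p^n)$ and $a,b,c\in\mathrm{GF}(p^n)$, let ${}_c\Delta_F(a,b)=\#\{x\in\mathrm{GF}(p^n): F(x+a)-cF(x)=b\}$. The $c$-differential uniformity of $F$ is ${}_c\Delta_F=\max\{{}_c\Delta_F(a,b): a,b\in\mathrm{GF}(p^n),\ \text{and } a\neq 0 \text{ if } c=1\}$. $F$ is perfect $c$-nonlinear (P$c$N) if ${}_c\Delta_F=1$. *)

theory Defs
  imports Main "HOL-Computational_Algebra.Primes"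
begin

definition c_diff_count :: "('a::field \<Rightarrow> 'a) \<Rightarrow> 'a \<Rightarrow> 'a \<Rightarrow> 'a \<Rightarrow> nat" where
  "c_diff_count F c a b = card {x. F (x + a) - c * F x = b}"

definition c_diff_uniformity :: "('a::{field,finite} \<Rightarrow> 'a) \<Rightarrow> 'a \<Rightarrow> nat" where
  "c_diff_uniformity F c =
     Max {c_diff_count F c a b | a b. a \<noteq> 0 \<or> c \<noteq> 1}"

definition perfect_c_nonlinear :: "('a::{field,finite} \<Rightarrow> 'a) \<Rightarrow> 'a \<Rightarrow> bool" where
  "perfect_c_nonlinear F c \<longleftrightarrow> c_diff_uniformity F c = 1"

end

theory Submission
  imports Defs "HOL-Algebra.Algebraic_Closure_Type" "HOL-Number_Theory.Residues"
begin

hide_const (open) Divisibility.prime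


lemma fermat_field:
  fixes x :: "'a::{field,finite}"
  shows "x ^ card (UNIV :: 'a set) = x"
proof (cases "x = 0")
  case False
  have "x * (\<Prod>y\<in>UNIV-{0}. x * y) = x * x ^ (card (UNIV :: 'a set) - 1) * \<Prod>(UNIV-{0})"
    by (simp add: prod.distrib mult_ac)
  also have "x * x ^ (card (UNIV :: 'a set) - 1) = x ^ Suc (card (UNIV :: 'a set) - 1)"
    by (subst power_Suc) auto
  also have "Suc (card (UNIV :: 'a set) - 1) = card (UNIV :: 'a set)"
    using finite_UNIV_card_ge_0[where ?'a = 'a] by simp
  also have "(\<Prod>y\<in>UNIV-{0}. x * y) = (\<Prod>y\<in>UNIV-{0}. y)"
    by (rule prod.reindex_bij_witness[of _ "\<lambda>y. y / x" "\<lambda>y. x * y"]) (use False in auto)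
  finally show ?thesis
    by simp
qed (use finite_UNIV_card_ge_0[where ?'a = 'a] in auto)

lemma bez_pow_eq:
  fixes A B :: "'b::field"
  assumes "coprime d e" "d > 0" "A ^ d = B ^ d" "A ^ e = B ^ e" "A \<noteq> 0"
  shows "A = B"
proof -
  obtain x y where xy: "d * x = e * y + gcd d e" using bezout_nat[of d e] assms(2) by auto
  hence xy: "d * x = e * y + 1" using assms(1) by simp
  have "A ^ (d*x) = B ^ (d*x)" by (simp add: power_mult assms(3))
  moreover have "A ^ (d*x) = A ^ (e*y) * A" "B ^ (d*x) = B ^ (e*y) * B"
    by (simp_all only: xy power_add power_one_right)
  ultimately have "A ^ (e*y) * A = B ^ (e*y) * B" by simp
  moreover have "A ^ (e*y) = B ^ (e*y)" by (simp add: power_mult assms(4))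
  moreover have "A ^ (e*y) \<noteq> 0" using assms(5) by simp
  ultimately show ?thesis by (metis mult_cancel_left)
qed

lemma char_eq:
  assumes "prime p" "card (UNIV :: 'a::{field,finite} set) = p ^ n"
  shows "CHAR('a) = p"
proof -
  have "CHAR('a) > 0" by (simp add: finite_imp_CHAR_pos)
  hence pc: "prime CHAR('a)" using prime_CHAR_semidom by blast
  have "CHAR('a) dvd p ^ n" using CHAR_dvd_CARD[where 'a='a] assms(2) by simp
  hence "CHAR('a) dvd p" using pc prime_dvd_power by blast
  thus ?thesis using pc assms(1) primes_dvd_imp_eq by blast
qed

lemma sqrt_ac: "\<exists>a::'b::field alg_closure. a ^ 2 = c"
proof -
  have "\<exists>x::'b alg_closure. (\<Sum>k\<le>2. (\<lambda>k. if k = 2 then 1 else if k = 0 then -c else 0) k * x ^ k) = 0"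
    by (rule alg_closed) auto
  then obtain x :: "'b alg_closure" where "(\<Sum>k\<le>2. (\<lambda>k. if k = 2 then 1 else if k = 0 then -c else 0) k * x ^ k) = 0" by blast
  hence "x^2 - c = 0" by (simp add: numeral_2_eq_2 atMost_Suc)
  thus ?thesis by auto
qed

lemma root_unity_ac:
  assumes "E \<ge> 2" "\<not> CHAR('b::field) dvd E"
  shows "\<exists>w::'b alg_closure. w ^ E = 1 \<and> w \<noteq> 1"
proof -
  have "\<exists>x::'b alg_closure. (\<Sum>k\<le>E-1. (\<lambda>k. 1) k * x ^ k) = 0"
    by (rule alg_closed) (use assms in auto)
  then obtain x :: "'b alg_closure" where x: "(\<Sum>k\<le>E-1. x ^ k) = 0" by auto
  have "{..E-1} = {..<E}" using assms by auto
  hence x': "(\<Sum>k<E. x ^ k) = 0" using x by simp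
  hence "1 - x^E = 0" using one_diff_power_eq[of x E] by simp
  moreover have "x \<noteq> 1"
  proof
    assume "x = 1"
    hence "of_nat E = (0::'b alg_closure)" using x' by simp
    hence "CHAR('b alg_closure) dvd E" using of_nat_eq_0_iff_char_dvd by blast
    thus False using assms by simp
  qed
  ultimately show ?thesis by auto
qed

lemma fixed_in_range:
  fixes z :: "'a::{field,finite} alg_closure"
  assumes "z ^ card (UNIV :: 'a set) = z" "card (UNIV :: 'a set) \<ge> 2"
  shows "z \<in> range to_ac"
proof -
  define q where "q = card (UNIV :: 'a set)"
  define P where "P = (monom 1 q - [:0, 1:] :: 'a alg_closure poly)"
  have dP: "degree P = q"
  proof -
    have "P = monom 1 q + (- [:0, 1:])" unfolding P_def by simp
    also have "degree \<dots> = q" using assms(2) q_def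
      by (subst degree_add_eq_left) (auto simp: degree_monom_eq)
    finally show ?thesis .
  qed
  hence P0: "P \<noteq> 0" using assms(2) q_def by auto
  have S: "{x. poly P x = 0} = {x. x ^ q = x}" unfolding P_def by (auto simp: poly_monom)
  have fin: "finite {x::'a alg_closure. x ^ q = x}" using poly_roots_finite[OF P0] S by simp
  have cS: "card {x::'a alg_closure. x ^ q = x} \<le> q" using card_poly_roots_bound[OF P0] S dP by simp
  have sub: "range to_ac \<subseteq> {x::'a alg_closure. x ^ q = x}"
    using fermat_field q_def by (auto simp flip: to_ac_power)
  have "card (range (to_ac :: 'a \<Rightarrow> 'a alg_closure)) = q"
    using card_image[OF inj_on_subset[OF inj_to_ac]] q_def by auto
  hence "range to_ac = {x::'a alg_closure. x ^ q = x}"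
    using card_subset_eq[OF fin sub] cS card_mono[OF fin sub] by linarith
  thus ?thesis using assms(1) q_def by auto
qed



lemma nt_core:
  fixes m s :: int and p k n :: nat
  assumes h1: "[int p ^ k = -1] (mod m)" and h2: "[int p ^ n = s] (mod m)"
    and hs: "s = 1 \<or> s = -1" and he: "even (k div gcd k n)" and hk: "k > 0"
  shows "m dvd 2"
proof -
  define g where "g = gcd k n"
  obtain x y where xy: "k * x = n * y + g" using bezout_nat[of k n] hk g_def by auto
  define t where "t = int p ^ g"
  have "int p ^ (k*x) = int p ^ (n*y) * t" unfolding t_def by (simp add: xy power_add)
  moreover have "[int p ^ (k*x) = (-1)^x] (mod m)" using cong_pow[OF h1, of x] by (simp add: power_mult)
  moreover have "[int p ^ (n*y) = s^y] (mod m)" using cong_pow[OF h2, of y] by (simp add: power_mult)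
  ultimately have c: "[s^y * t = (-1)^x] (mod m)"
    by (metis cong_scalar_right cong_sym cong_trans)
  have ss: "s^y * s^y = 1" using hs by (auto simp flip: power_mult_distrib)
  have "[s^y * (s^y * t) = s^y * (-1)^x] (mod m)" using cong_scalar_left[OF c] .
  hence ct: "[t = s^y * (-1)^x] (mod m)" using ss by (simp add: mult.assoc[symmetric])
  define w where "w = s^y * (-1)^x"
  have w2: "w * w = 1" unfolding w_def using hs
    by (auto simp: algebra_simps simp flip: power_add power_mult_distrib)
  obtain j where j: "k div g = 2 * j" using he g_def by auto
  have "w ^ (k div g) = 1" using j w2 by (simp add: power_mult power2_eq_square)
  moreover have "t ^ (k div g) = int p ^ k" unfolding t_def g_def
    by (simp flip: power_mult)
  ultimately have "[int p ^ k = 1] (mod m)" using cong_pow[OF ct, of "k div g"] w_def by simp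
  hence "[-1 = (1::int)] (mod m)" using h1 by (metis cong_sym cong_trans)
  thus ?thesis by (simp add: cong_iff_dvd_diff dvd_minus_iff)
qed



lemma odd_pow_mod4:
  fixes p k :: nat
  assumes "odd p" "even k"
  shows "p ^ k mod 4 = 1"
proof -
  have "p mod 4 = 1 \<or> p mod 4 = 3" using assms(1) by presburger
  hence "(p mod 4)^2 mod 4 = 1" by auto
  hence p2: "p^2 mod 4 = 1" by (metis power_mod)
  obtain j where "k = 2*j" using assms(2) by auto
  hence "p^k = (p^2)^j" by (simp add: power_mult)
  hence "p^k mod 4 = ((p^2) mod 4)^j mod 4" by (metis power_mod)
  thus ?thesis using p2 by simp
qed

lemma nt_even:
  fixes p k n :: nat
  assumes "prime p" "odd p" "k > 0" "n > 0" "even (k div gcd k n)"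
  shows "odd ((p^k+1) div 2)" "coprime ((p^k+1) div 2) (p^n - 1)" "coprime ((p^k+1) div 2) (p^n + 1)"
proof -
  define d where "d = (p^k+1) div 2"
  have "even k" using assms(5) by (metis dvd_mult dvd_mult_div_cancel gcd_dvd1 mult.commute)
  hence "p^k mod 4 = 1" using odd_pow_mod4 assms(2) by blast
  thus od: "odd ((p^k+1) div 2)" by presburger
  have pk: "p^k + 1 = 2 * d" using \<open>p^k mod 4 = 1\<close> d_def by presburger
  have pn: "p^n \<ge> 1" using assms(1) prime_gt_0_nat zero_less_power by (metis Suc_leI One_nat_def)
  have gen: "gcd d N = 1" if hN: "[int p ^ n = s] (mod int N)" "s = 1 \<or> s = -1" for N s
  proof -
    define m where "m = gcd d N"
    have "m dvd d" "m dvd N" unfolding m_def by auto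
    hence "int m dvd int p ^ k + 1" using pk by (metis dvd_mult2 mult.commute of_nat_1 of_nat_add of_nat_dvd_iff of_nat_power)
    hence c1: "[int p ^ k = -1] (mod int m)" by (simp add: cong_iff_dvd_diff)
    have c2: "[int p ^ n = s] (mod int m)" using hN(1) \<open>m dvd N\<close> by (meson cong_dvd_modulus of_nat_dvd_iff)
    have "int m dvd 2" using nt_core[OF c1 c2 hN(2) assms(5) assms(3)] .
    hence "m dvd 2" by (metis of_nat_dvd_iff of_nat_numeral)
    moreover have "odd m" using \<open>m dvd d\<close> od d_def by (metis dvd_trans)
    ultimately show ?thesis unfolding m_def
      by (metis dvd_antisym dvd_refl gcd_nat.order_iff_strict nat_dvd_1_iff_1 prime_nat_iff two_is_prime_nat)
  qed
  have "[int p ^ n = 1] (mod int (p^n - 1))" using pn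
    by (simp add: cong_iff_dvd_diff of_nat_diff)
  from gen[OF this] show "coprime ((p^k+1) div 2) (p^n - 1)" unfolding d_def by (simp add: coprime_iff_gcd_eq_1)
  have "[int p ^ n = -1] (mod int (p^n + 1))"
    by (simp add: cong_iff_dvd_diff add.commute)
  from gen[OF this] show "coprime ((p^k+1) div 2) (p^n + 1)" unfolding d_def by (simp add: coprime_iff_gcd_eq_1)
qed

lemma dvd_pow_plus1:
  fixes t j :: nat
  shows "odd j \<Longrightarrow> (t + 1) dvd (t^j + 1)" "even j \<Longrightarrow> (t + 1) dvd (t^j - 1)"
proof -
  have c: "[int t = -1] (mod int t + 1)" by (simp add: cong_iff_dvd_diff)
  have c': "[int t ^ j = (-1)^j] (mod int t + 1)" using cong_pow[OF c] .
  show "(t + 1) dvd (t^j + 1)" if "odd j"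
  proof -
    have "int (t+1) dvd int (t^j + 1)" using c' that by (simp add: cong_iff_dvd_diff add.commute)
    thus ?thesis by (simp only: of_nat_dvd_iff)
  qed
  show "(t + 1) dvd (t^j - 1)" if "even j"
  proof (cases "t = 0")
    case True thus ?thesis by simp
  next
    case False
    hence "t^j \<ge> 1" by simp
    have "int (t+1) dvd int (t^j - 1)" using c' that \<open>t^j \<ge> 1\<close> by (simp add: cong_iff_dvd_diff of_nat_diff add.commute)
    thus ?thesis by (simp only: of_nat_dvd_iff)
  qed
qed

lemma nt_odd:
  fixes p k n :: nat
  assumes "prime p" "odd p" "k > 0" "n > 0" "odd (k div gcd k n)"
  defines "E \<equiv> (p ^ gcd k n + 1) div 2"
  shows "E dvd (p^k+1) div 2" "even (n div gcd k n) \<Longrightarrow> E dvd p^n - 1"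
    "odd (n div gcd k n) \<Longrightarrow> E dvd p^n + 1" "E \<ge> 2"
proof -
  define g where "g = gcd k n"
  define t where "t = p ^ g"
  have "odd t" unfolding t_def using assms(2) by simp
  hence tE: "t + 1 = 2 * E" unfolding E_def t_def g_def by presburger
  have p3: "p \<ge> 3" using assms(1,2) prime_ge_2_nat[OF assms(1)] by (cases "p = 2") auto
  have "g > 0" unfolding g_def using assms(3) by simp
  hence pt: "t \<ge> 3" unfolding t_def using p3 self_le_power[of p g] by linarith
  show "E \<ge> 2" using tE pt by linarith
  have kk: "p^k = t ^ (k div g)" unfolding t_def g_def by (simp flip: power_mult)
  have nn: "p^n = t ^ (n div g)" unfolding t_def g_def by (simp flip: power_mult)
  have "(t+1) dvd (p^k+1)" using dvd_pow_plus1(1)[of "k div g" t] assms(5) kk g_def by simp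
  then obtain c where c: "p^k+1 = 2 * E * c" using tE by auto
  thus "E dvd (p^k+1) div 2" by simp
  show "E dvd p^n - 1" if "even (n div gcd k n)"
    using dvd_pow_plus1(2)[of "n div g" t] that nn g_def tE by (metis dvd_mult_right)
  show "E dvd p^n + 1" if "odd (n div gcd k n)"
    using dvd_pow_plus1(1)[of "n div g" t] that nn g_def tE by (metis dvd_mult_right)
qed



locale ffs =
  fixes p n k :: nat and TY :: "'a::{field,finite} itself"
  assumes pp: "prime p" and po: "odd p" and n0: "n > 0" and k0: "k > 0"
    and cardq: "card (UNIV :: 'a set) = p ^ n"
begin

abbreviation q where "q \<equiv> p ^ n"
abbreviation P where "P \<equiv> p ^ k"
abbreviation d where "d \<equiv> (p ^ k + 1) div 2"

lemma charA: "CHAR('a) = p" using char_eq[OF pp cardq] .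
lemma charK: "CHAR('a alg_closure) = p" using charA by simp

lemma P_odd: "odd P" using po by simp
lemma m_eq: "P + 1 = 2 * d" using P_odd by presburger
lemma d_pos: "d > 0" using m_eq by simp
lemma q_ge2: "q \<ge> 2" using prime_ge_2_nat[OF pp] n0
  by (metis le_trans self_le_power less_imp_le_nat nat_le_linear not_less one_le_numeral dual_order.trans power_increasing_iff prime_gt_1_nat power_one_right Suc_leI)
lemma q_odd: "odd q" using po by simp

lemma two_ne0K: "(2::'a alg_closure) \<noteq> 0"
proof
  assume "(2::'a alg_closure) = 0"
  hence "of_nat 2 = (0::'a alg_closure)" by simp
  hence "p dvd 2" using of_nat_eq_0_iff_char_dvd charK by metis
  thus False using po prime_ge_2_nat[OF pp] dvd_imp_le[of p 2] by (cases "p = 2") auto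
qed

lemma two_ne0A: "(2::'a) \<noteq> 0"
  using two_ne0K by (metis to_ac_numeral to_ac_0)

lemma frobK: "(x + y :: 'a alg_closure) ^ (p ^ j) = x ^ (p ^ j) + y ^ (p ^ j)"
  by (rule freshmans_dream'[where n=j]) (simp_all add: charA pp)

lemma fermatA: "(x::'a) ^ q = x" using fermat_field[of x] cardq by simp
lemma fermatK: "(to_ac (x::'a)) ^ q = to_ac x" by (simp flip: to_ac_power add: fermatA)

lemma fixedK: "(z::'a alg_closure) ^ q = z \<Longrightarrow> z \<in> range to_ac"
  using fixed_in_range[of z] cardq q_ge2 by simp

lemma fermatA1: "(x::'a) \<noteq> 0 \<Longrightarrow> x ^ (q - 1) = 1"
proof -
  assume "x \<noteq> 0"
  have "x ^ (q - 1) * x = x ^ q" using q_ge2 by (metis Suc_diff_1 le_trans not_less_eq_eq one_le_numeral power_Suc2 zero_less_iff_neq_zero le_zero_eq Suc_le_eq numeral_2_eq_2 Suc_leD)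
  thus ?thesis using fermatA \<open>x \<noteq> 0\<close> by simp
qed

lemma negP: "(- x :: 'a alg_closure) ^ P = - (x ^ P)" using P_odd by simp

lemma key_id:
  fixes a b :: "'a alg_closure"
  shows "(a + b) ^ (P + 1) + (a - b) ^ (P + 1) = 2 * (a ^ (P + 1) + b ^ (P + 1))"
proof -
  have h1: "(a + b) ^ P = a ^ P + b ^ P" by (rule frobK)
  have h2: "(a - b) ^ P = a ^ P - b ^ P" using frobK[of a "-b" k] negP[of b] by simp
  have e1: "(a+b)^(P+1) = (a+b)*(a^P + b^P)" by (subst h1[symmetric]) simp
  have e2: "(a-b)^(P+1) = (a-b)*(a^P - b^P)" by (subst h2[symmetric]) simp
  show ?thesis unfolding e1 e2 by (simp add: algebra_simps)
qed

lemma pow_m: "(a :: 'b::comm_semiring_1) ^ (P + 1) = (a^2) ^ d"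
  by (subst m_eq) (simp add: power_mult)

end



context ffs begin

lemma pow_swap: "((x::'b::monoid_mult)^a)^b = (x^b)^a" by (metis power_mult mult.commute)

lemma q_split: "(z::'b::comm_semiring_1) ^ q = z ^ (q - 1) * z"
proof -
  have "q = Suc (q - 1)" using q_ge2 by simp
  hence "z ^ q = z ^ Suc (q - 1)" by simp
  thus ?thesis by (simp only: power_Suc2)
qed

lemma q_split2: "(z::'b::comm_semiring_1) ^ (q + 1) = z ^ (q - 1) * z^2"
proof -
  have "q + 1 = (q - 1) + 2" using q_ge2 by simp
  thus ?thesis by (simp only: power_add)
qed

lemma sq_frob:
  assumes "(al :: 'a alg_closure) ^ 2 = to_ac u"
  shows "al ^ q = al \<or> al ^ q = - al"
proof -
  have "(al ^ q) ^ 2 = al ^ 2"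
    by (subst pow_swap) (simp add: assms fermatK)
  thus ?thesis using power2_eq_iff by blast
qed

lemma memb:
  fixes al be :: "'a alg_closure"
  assumes "al ^ 2 = to_ac u" "be ^ 2 = to_ac v" "u - v = a" "a \<noteq> 0"
  shows "al + be \<noteq> 0 \<and> (((al + be)^2) ^ (q - 1) = 1 \<or> ((al + be)^2) ^ (q + 1) = (to_ac a)^2)"
proof -
  define de where "de = al + be"
  have "de * (al - be) = al^2 - be^2" unfolding de_def by (simp add: power2_eq_square algebra_simps)
  also have "\<dots> = to_ac a" using assms(1,2) by (simp flip: assms(3))
  finally have prod: "de * (al - be) = to_ac a" .
  hence de0: "de \<noteq> 0" using assms(4) by auto
  have fq: "de ^ q = al ^ q + be ^ q" unfolding de_def by (rule frobK)
  have c1: "de ^ q = de \<Longrightarrow> (de^2) ^ (q - 1) = 1"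
  proof -
    assume "de ^ q = de"
    hence "de ^ (q - 1) = 1" using q_split[of de] de0 by simp
    thus ?thesis by (subst pow_swap) simp
  qed
  have c2: "de ^ q = - de \<Longrightarrow> (de^2) ^ (q - 1) = 1"
  proof -
    assume "de ^ q = - de"
    hence "de ^ (q - 1) * de = (- 1) * de" using q_split[of de] by simp
    hence "de ^ (q - 1) = - 1" using de0 by (rule mult_right_cancel[THEN iffD1, rotated])
    hence "(de ^ (q - 1))^2 = 1" by simp
    thus ?thesis by (subst pow_swap) simp
  qed
  have c3: "de ^ q = al - be \<or> de ^ q = -(al - be) \<Longrightarrow> (de^2) ^ (q + 1) = (to_ac a)^2"
  proof -
    assume h: "de ^ q = al - be \<or> de ^ q = -(al - be)"
    have "de ^ (q+1) = de ^ q * de" by simp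
    have "de ^ q * de = to_ac a \<or> de ^ q * de = - to_ac a"
      using h
    proof
      assume "de ^ q = al - be" thus ?thesis using prod by (simp add: mult.commute)
    next
      assume "de ^ q = -(al - be)" hence "de ^ q * de = - (de * (al - be))" by (metis mult_minus_left mult.commute)
      thus ?thesis using prod by simp
    qed
    hence "de ^ (q+1) = to_ac a \<or> de ^ (q+1) = - to_ac a" using \<open>de ^ (q+1) = de ^ q * de\<close> by (simp add: mult.commute)
    hence "(de ^ (q+1))^2 = (to_ac a)^2" by auto
    thus ?thesis by (subst pow_swap) simp
  qed
  have "de ^ q = de \<or> de ^ q = - de \<or> de ^ q = al - be \<or> de ^ q = -(al - be)"
  proof -
    from sq_frob[OF assms(1)] sq_frob[OF assms(2)]
    have "(al^q = al \<and> be^q = be) \<or> (al^q = al \<and> be^q = -be) \<or> (al^q = -al \<and> be^q = be) \<or> (al^q = -al \<and> be^q = -be)"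
      by blast
    thus ?thesis
    proof (elim disjE conjE)
      assume "al^q = al" "be^q = be" thus ?thesis using fq unfolding de_def by simp
    next
      assume "al^q = al" "be^q = -be" thus ?thesis using fq unfolding de_def by simp
    next
      assume "al^q = -al" "be^q = be" thus ?thesis using fq unfolding de_def by simp
    next
      assume "al^q = -al" "be^q = -be" thus ?thesis using fq unfolding de_def by simp
    qed
  qed
  thus ?thesis using c1 c2 c3 de0 unfolding de_def by blast
qed

lemma lam_inj:
  fixes L1 L2 :: "'a alg_closure"
  assumes cop1: "coprime d (q - 1)" and cop2: "coprime d (q + 1)" and dodd: "odd d"
    and a0: "a \<noteq> 0" and L10: "L1 \<noteq> 0" and L20: "L2 \<noteq> 0"
    and m1: "L1 ^ (q - 1) = 1 \<or> L1 ^ (q + 1) = (to_ac a)^2"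
    and m2: "L2 ^ (q - 1) = 1 \<or> L2 ^ (q + 1) = (to_ac a)^2"
    and eq: "L1 ^ d = L2 ^ d"
  shows "L1 = L2"
proof -
  define A where "A = to_ac a"
  have A0: "A \<noteq> 0" using a0 A_def by simp
  have Aq1: "A ^ (q - 1) = 1" unfolding A_def using fermatA1[OF a0] by (simp flip: to_ac_power)
  have d0: "d > 0" by (rule d_pos)
  have mixed: "xx = yy" if X0: "xx ^ (q - 1) = 1" and Y1: "yy ^ (q + 1) = A^2" and XY: "xx ^ d = yy ^ d" and Y0: "yy \<noteq> 0"
    for xx yy :: "'a alg_closure"
  proof -
    define c where "c = xx ^ d"
    have "c ^ (q - 1) = 1" unfolding c_def using X0 by (subst pow_swap) simp
    hence "c ^ (q + 1) = c ^ 2" using q_split2[of c] by simp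
    moreover have "c ^ (q + 1) = (A ^ d) ^ 2" unfolding c_def XY using Y1
      by (subst pow_swap) (metis Y1 pow_swap)
    ultimately have "c ^ 2 = (A^d)^2" by simp
    hence "c = A ^ d \<or> c = - (A ^ d)" using power2_eq_iff by blast
    then obtain s where s: "s = A \<or> s = - A" and cs: "c = s ^ d"
    proof (elim disjE)
      assume "c = A ^ d" thus ?thesis using that by blast
    next
      assume "c = - (A ^ d)"
      hence "c = (- A) ^ d" using dodd by (simp add: power_minus_odd)
      thus ?thesis using that by blast
    qed
    have s1: "s ^ (q - 1) = 1" using s Aq1 q_odd by (auto simp: power_minus_even)
    have s2: "s ^ (q + 1) = A ^ 2" using s q_split2[of s] s1 by auto
    have s0: "s \<noteq> 0" using s A0 by auto
    have xx0: "xx \<noteq> 0"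
    proof
      assume "xx = 0"
      moreover have "q - 1 > 0" using q_ge2 by simp
      ultimately show False using X0 by (simp add: power_0_left)
    qed
    have "xx = s"
      by (rule bez_pow_eq[OF cop1 d0]) (use cs c_def X0 s1 xx0 in auto)
    moreover have "yy = s"
      by (rule bez_pow_eq[OF cop2 d0]) (use cs c_def XY s2 Y1 Y0 in auto)
    ultimately show ?thesis by simp
  qed
  show ?thesis
    using m1 m2
  proof (elim disjE)
    assume "L1 ^ (q - 1) = 1" "L2 ^ (q - 1) = 1"
    thus ?thesis using bez_pow_eq[OF cop1 d0 eq] L10 by simp
  next
    assume "L1 ^ (q + 1) = (to_ac a)^2" "L2 ^ (q + 1) = (to_ac a)^2"
    thus ?thesis using bez_pow_eq[OF cop2 d0 eq] L10 by simp
  next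
    assume "L1 ^ (q - 1) = 1" "L2 ^ (q + 1) = (to_ac a)^2"
    thus ?thesis using mixed[of L1 L2] eq L20 A_def by simp
  next
    assume "L1 ^ (q + 1) = (to_ac a)^2" "L2 ^ (q - 1) = 1"
    thus ?thesis using mixed[of L2 L1] eq L10 A_def by simp
  qed
qed

end


lemma sign_lemma:
  fixes D G D2 G2 :: "'b::field"
  assumes "D * G = D2 * G2" "D \<noteq> 0" "D = D2 \<or> D = - D2"
  shows "D2 + G2 = D + G \<or> D2 + G2 = -(D + G)"
  using assms(3)
proof
  assume h: "D = D2"
  hence "G = G2" using assms(1,2) by simp
  thus ?thesis using h by simp
next
  assume h: "D = - D2"
  hence "D * G = D * (- G2)" using assms(1) by simp
  hence "G = - G2" using assms(2) by (metis mult_left_cancel)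
  thus ?thesis using h by simp
qed

lemma half_lemma:
  fixes al be al2 be2 :: "'b::field"
  assumes "(2::'b) \<noteq> 0"
    and "(al2 + be2) + (al2 - be2) = (al + be) + (al - be) \<or> (al2 + be2) + (al2 - be2) = -((al + be) + (al - be))"
  shows "al2 ^ 2 = al ^ 2"
proof -
  have "2 * al2 = 2 * al \<or> 2 * al2 = 2 * (- al)" using assms(2) by (simp add: algebra_simps mult_2)
  hence "al2 = al \<or> al2 = - al" using assms(1) by (metis mult_left_cancel)
  thus ?thesis by auto
qed

context ffs begin

lemma core_S:
  fixes al be al2 be2 :: "'a alg_closure"
  assumes cop1: "coprime d (q - 1)" and cop2: "coprime d (q + 1)" and dodd: "odd d"
    and a0: "a \<noteq> 0"
    and s1: "al ^ 2 = to_ac (x + a)" and s2: "be ^ 2 = to_ac x"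
    and s3: "al2 ^ 2 = to_ac (y + a)" and s4: "be2 ^ 2 = to_ac y"
    and eq: "(al + be) ^ (P + 1) = (al2 + be2) ^ (P + 1)"
  shows "x = y"
proof -
  have m1: "al + be \<noteq> 0 \<and> (((al + be)^2) ^ (q - 1) = 1 \<or> ((al + be)^2) ^ (q + 1) = (to_ac a)^2)"
    by (rule memb[OF s1 s2]) (use a0 in simp_all)
  have m2: "al2 + be2 \<noteq> 0 \<and> (((al2 + be2)^2) ^ (q - 1) = 1 \<or> ((al2 + be2)^2) ^ (q + 1) = (to_ac a)^2)"
    by (rule memb[OF s3 s4]) (use a0 in simp_all)
  have "((al + be)^2) ^ d = ((al2 + be2)^2) ^ d" unfolding pow_m[symmetric] by (rule eq)
  moreover have "(al + be)^2 \<noteq> 0" "(al2 + be2)^2 \<noteq> 0" using m1 m2 by simp_all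
  ultimately have L: "(al + be)^2 = (al2 + be2)^2"
    using lam_inj[OF cop1 cop2 dodd a0, of "(al + be)^2" "(al2 + be2)^2"] conjunct2[OF m1] conjunct2[OF m2]
    by blast
  have p1: "(al + be) * (al - be) = to_ac a"
  proof -
    have "(al + be) * (al - be) = al^2 - be^2" by (simp add: power2_eq_square algebra_simps)
    thus ?thesis using s1 s2 by simp
  qed
  have p2: "(al2 + be2) * (al2 - be2) = to_ac a"
  proof -
    have "(al2 + be2) * (al2 - be2) = al2^2 - be2^2" by (simp add: power2_eq_square algebra_simps)
    thus ?thesis using s3 s4 by simp
  qed
  have pp: "(al + be) * (al - be) = (al2 + be2) * (al2 - be2)" using p1 p2 by (simp only:)
  have d0: "al + be \<noteq> 0" using m1 by blast
  have "al + be = al2 + be2 \<or> al + be = -(al2 + be2)" using power2_eq_iff[THEN iffD1, OF L] .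
  hence "(al2 + be2) + (al2 - be2) = (al + be) + (al - be) \<or> (al2 + be2) + (al2 - be2) = -((al + be) + (al - be))"
    using sign_lemma[OF pp d0] by blast
  hence "al2 ^ 2 = al ^ 2" using half_lemma two_ne0K by blast
  hence "to_ac (y + a) = to_ac (x + a)" using s1 s3 by simp
  thus ?thesis by simp
qed

lemma inj_main:
  assumes cop1: "coprime d (q - 1)" and cop2: "coprime d (q + 1)" and dodd: "odd d"
    and a0: "(a::'a) \<noteq> 0"
    and G: "(x + a) ^ d + x ^ d = (y + a) ^ d + y ^ d"
  shows "x = y"
proof -
  obtain al :: "'a alg_closure" where s1: "al ^ 2 = to_ac (x + a)" using sqrt_ac by blast
  obtain be :: "'a alg_closure" where s2: "be ^ 2 = to_ac x" using sqrt_ac by blast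
  obtain al2 :: "'a alg_closure" where s3: "al2 ^ 2 = to_ac (y + a)" using sqrt_ac by blast
  obtain be2 :: "'a alg_closure" where s4: "be2 ^ 2 = to_ac y" using sqrt_ac by blast
  define m where "m = P + 1"
  have e1: "al^(P+1) = to_ac ((x+a)^d)" "be^(P+1) = to_ac (x^d)"
    "al2^(P+1) = to_ac ((y+a)^d)" "be2^(P+1) = to_ac (y^d)"
    by (simp_all only: pow_m s1 s2 s3 s4 to_ac_power)
  define D where "D = (al + be) ^ m" define C where "C = (al - be) ^ m"
  define D2 where "D2 = (al2 + be2) ^ m" define C2 where "C2 = (al2 - be2) ^ m"
  have v1: "2 * to_ac ((x + a) ^ d + x ^ d) = D + C"
    unfolding D_def C_def m_def key_id by (simp only: e1 to_ac_add)
  have v2: "2 * to_ac ((y + a) ^ d + y ^ d) = D2 + C2"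
    unfolding D2_def C2_def m_def key_id by (simp only: e1 to_ac_add)
  have p1: "(al + be) * (al - be) = to_ac a"
  proof -
    have "(al + be) * (al - be) = al^2 - be^2" by (simp add: power2_eq_square algebra_simps)
    thus ?thesis using s1 s2 by simp
  qed
  have p2: "(al2 + be2) * (al2 - be2) = to_ac a"
  proof -
    have "(al2 + be2) * (al2 - be2) = al2^2 - be2^2" by (simp add: power2_eq_square algebra_simps)
    thus ?thesis using s3 s4 by simp
  qed
  have "to_ac ((x + a) ^ d + x ^ d) = to_ac ((y + a) ^ d + y ^ d)" using G by (rule arg_cong)
  hence sum: "D + C = D2 + C2" using v1 v2 by metis
  have prd: "D * C = D2 * C2" unfolding D_def C_def D2_def C2_def
    by (simp only: p1 p2 flip: power_mult_distrib)
  have "(D - D2) * (D - C2) = D * D - D * (D2 + C2) + D2 * C2" by (simp add: algebra_simps)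
  also have "\<dots> = D * D - D * (D + C) + D * C" by (simp only: sum[symmetric] prd[symmetric])
  also have "\<dots> = 0" by (simp add: algebra_simps)
  finally have "D = D2 \<or> D = C2" by simp
  thus ?thesis
  proof
    assume "D = D2"
    hence "(al + be) ^ (P + 1) = (al2 + be2) ^ (P + 1)" unfolding D_def D2_def m_def .
    thus ?thesis by (rule core_S[OF cop1 cop2 dodd a0 s1 s2 s3 s4])
  next
    assume "D = C2"
    hence "(al + be) ^ (P + 1) = (al2 + (- be2)) ^ (P + 1)" unfolding D_def C2_def m_def by simp
    moreover have "(- be2) ^ 2 = to_ac y" using s4 by simp
    ultimately show ?thesis using core_S[OF cop1 cop2 dodd a0 s1 s2 s3] by blast
  qed
qed

lemma inj_zero:
  assumes cop1: "coprime d (q - 1)"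
    and G: "(x::'a) ^ d + x ^ d = y ^ d + y ^ d"
  shows "x = y"
proof -
  have "2 * x ^ d = 2 * y ^ d" by (simp only: mult_2 G)
  hence xy: "x ^ d = y ^ d" using two_ne0A by simp
  have z: "(0::'a) ^ d = 0" using d_pos by (simp add: zero_power)
  show ?thesis
  proof (cases "x = 0")
    case True
    hence "y ^ d = 0" using xy z by simp
    thus ?thesis using True by simp
  next
    case False
    have "y \<noteq> 0"
    proof
      assume "y = 0"
      hence "x ^ d = 0" using xy z by simp
      thus False using False by simp
    qed
    thus ?thesis using bez_pow_eq[OF cop1 d_pos xy] fermatA1 False by simp
  qed
qed

end


context ffs begin

lemma notp_dvd:
  assumes "E dvd q - 1 \<or> E dvd q + 1"
  shows "\<not> p dvd E"
proof
  assume pE: "p dvd E"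
  have pq: "p dvd q" using n0 by (simp add: dvd_power)
  have q1: "q \<ge> 1" using q_ge2 by simp
  from assms show False
  proof
    assume "E dvd q - 1"
    hence "p dvd q - 1" using pE by (meson dvd_trans)
    hence "p dvd q - (q - 1)" using pq by (rule dvd_diff_nat[rotated])
    hence "p dvd 1" using q1 by simp
    thus False using pp by simp
  next
    assume "E dvd q + 1"
    hence "p dvd q + 1" using pE by (meson dvd_trans)
    hence "p dvd (q + 1) - q" using pq by (rule dvd_diff_nat)
    hence "p dvd 1" by simp
    thus False using pp by simp
  qed
qed

lemma case_even_d:
  assumes "even d"
  shows "{0, -1} \<subseteq> {x::'a. (x + 1) ^ d - (-1) * x ^ d = 1}"
  using assms d_pos by auto

lemma case_B1:
  assumes "E dvd d" "E dvd q - 1" "E \<ge> 2"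
  shows "\<exists>w::'a. w ^ d = 1 \<and> w \<noteq> 1"
proof -
  have "\<not> CHAR('a) dvd E" using notp_dvd assms(2) charA by simp
  then obtain om :: "'a alg_closure" where om: "om ^ E = 1" "om \<noteq> 1"
    using root_unity_ac[OF assms(3)] by blast
  obtain j where j: "q - 1 = E * j" using assms(2) by blast
  have "om ^ (q - 1) = 1" using om(1) j by (simp add: power_mult)
  hence "om ^ q = om" using q_split[of om] by simp
  then obtain w where w: "om = to_ac w" using fixedK by blast
  obtain i where i: "d = E * i" using assms(1) by blast
  have "om ^ d = 1" using om(1) i by (simp add: power_mult)
  hence "w ^ d = 1" using w by (metis to_ac_1 to_ac_eq_iff to_ac_power)
  moreover have "w \<noteq> 1" using w om(2) by auto
  ultimately show ?thesis by blast
qed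

lemma case_B2:
  assumes "E dvd d" "E dvd q + 1" "E \<ge> 2" "odd d"
  shows "\<exists>a0 v0::'a. v0 \<noteq> 0 \<and> {0, v0} \<subseteq> {x. (x + a0) ^ d - (-1) * x ^ d = a0 ^ d}"
proof -
  have "\<not> CHAR('a) dvd E" using notp_dvd assms(2) charA by simp
  then obtain om :: "'a alg_closure" where om: "om ^ E = 1" "om \<noteq> 1"
    using root_unity_ac[OF assms(3)] by blast
  have Eodd: "odd E" using assms(1,4) by (metis dvd_trans even_two_times_div_two dvd_triv_left)
  have two: "(2::'a alg_closure) \<noteq> 0" by (rule two_ne0K)
  have omn: "om \<noteq> -1"
  proof
    assume "om = -1"
    hence "(-1::'a alg_closure) ^ E = 1" using om(1) by simp
    hence "(-1::'a alg_closure) = 1" using Eodd by simp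
    hence "(2::'a alg_closure) = 0" by (metis add.inverse_inverse one_add_one neg_eq_iff_add_eq_0)
    thus False using two by simp
  qed
  obtain j where j: "q + 1 = E * j" using assms(2) by blast
  have oq1: "om ^ (q + 1) = 1" using om(1) j by (simp add: power_mult)
  obtain i where i: "d = E * i" using assms(1) by blast
  have od: "om ^ d = 1" using om(1) i by (simp add: power_mult)
  define wq where "wq = om ^ q"
  have owq: "om * wq = 1" using oq1 unfolding wq_def by (simp add: mult.commute)
  have qq: "q * q = (q + 1) * (q - 1) + 1"
  proof -
    obtain r where "q = Suc r" using q_ge2 by (cases q) auto
    thus ?thesis by (simp add: algebra_simps)
  qed
  have oqq: "wq ^ q = om" unfolding wq_def
  proof -
    have "(om ^ q) ^ q = om ^ (q * q)" by (simp add: power_mult)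
    also have "\<dots> = (om ^ (q + 1)) ^ (q - 1) * om" by (simp only: qq power_add power_mult power_one_right)
    also have "\<dots> = om" using oq1 by simp
    finally show "(om ^ q) ^ q = om" .
  qed
  define de where "de = 1 + om"
  define ga where "ga = 1 + wq"
  have deq: "de ^ q = ga" unfolding de_def ga_def wq_def using frobK[of 1 om n] by simp
  have gaq: "ga ^ q = de" unfolding de_def ga_def using frobK[of 1 wq n] oqq by simp
  have negq: "(- z :: 'a alg_closure) ^ q = - (z ^ q)" for z using q_odd by simp
  have twoq: "(2::'a alg_closure) ^ q = 2" using fermatK[of 2] by simp
  define al where "al = (de + ga) / 2"
  define be where "be = (de - ga) / 2"
  have alq: "al ^ q = al" unfolding al_def
    by (simp add: power_divide twoq frobK deq gaq add.commute)
  have beq: "be ^ q = - be" unfolding be_def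
  proof -
    have "(de - ga) ^ q = de ^ q + (- ga) ^ q" using frobK[of de "- ga" n] by simp
    also have "\<dots> = ga - de" using deq gaq negq[of ga] by simp
    finally show "((de - ga) / 2) ^ q = - ((de - ga) / 2)" by (simp add: power_divide twoq)
  qed
  have "(al ^ 2) ^ q = al ^ 2" using alq by (metis pow_swap)
  then obtain u0 where u0: "al ^ 2 = to_ac u0" using fixedK by blast
  have "(be ^ 2) ^ q = be ^ 2" using beq by (metis pow_swap power2_eq_square mult_minus_left mult_minus_right minus_minus)
  then obtain v0 where v0: "be ^ 2 = to_ac v0" using fixedK by blast
  have s_ab: "al + be = de" "al - be = ga" unfolding al_def be_def using two by (simp_all add: field_simps)
  have aK: "al ^ 2 - be ^ 2 = de * ga"
  proof -
    have "al ^ 2 - be ^ 2 = (al + be) * (al - be)" by (simp add: power2_eq_square algebra_simps)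
    thus ?thesis using s_ab by simp
  qed
  define a0 where "a0 = u0 - v0"
  have ta0: "to_ac a0 = de * ga" unfolding a0_def using aK u0 v0 by simp
  have dg: "de = om * ga" unfolding de_def ga_def using owq by (simp add: algebra_simps)
  have om_m: "om ^ (P + 1) = 1"
  proof -
    have "om ^ (P + 1) = (om ^ 2) ^ d" by (rule pow_m)
    also have "\<dots> = (om ^ d) ^ 2" by (rule pow_swap)
    also have "\<dots> = 1" using od by simp
    finally show ?thesis .
  qed
  have "2 * (al ^ (P + 1) + be ^ (P + 1)) = de ^ (P + 1) + ga ^ (P + 1)"
    using key_id[of al be] s_ab by simp
  also have "de ^ (P + 1) = ga ^ (P + 1)" using dg om_m by (simp add: power_mult_distrib)
  finally have "2 * (al ^ (P + 1) + be ^ (P + 1)) = 2 * ga ^ (P + 1)" by simp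
  hence sumab: "al ^ (P + 1) + be ^ (P + 1) = ga ^ (P + 1)" using two by (metis mult_left_cancel)
  have dgd: "(de * ga) ^ d = ga ^ (P + 1)"
  proof -
    have "de * ga = om * ga ^ 2" using dg by (simp add: power2_eq_square)
    hence "(de * ga) ^ d = om ^ d * (ga ^ 2) ^ d" by (simp only: power_mult_distrib)
    also have "\<dots> = (ga ^ 2) ^ d" using od by simp
    also have "\<dots> = ga ^ (P + 1)" by (rule pow_m[symmetric])
    finally show ?thesis .
  qed
  have vu: "v0 + a0 = u0" unfolding a0_def by simp
  have "to_ac ((v0 + a0) ^ d + v0 ^ d) = (to_ac u0) ^ d + (to_ac v0) ^ d"
    by (simp only: vu to_ac_add to_ac_power)
  also have "\<dots> = al ^ (P + 1) + be ^ (P + 1)" by (simp only: u0[symmetric] v0[symmetric] pow_m)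
  also have "\<dots> = to_ac (a0 ^ d)" by (simp only: sumab dgd[symmetric] ta0[symmetric] to_ac_power)
  finally have "to_ac ((v0 + a0) ^ d + v0 ^ d) = to_ac (a0 ^ d)" .
  hence "(v0 + a0) ^ d + v0 ^ d = a0 ^ d" by (simp only: to_ac_eq_iff)
  hence G: "(v0 + a0) ^ d - (-1) * v0 ^ d = a0 ^ d" by simp
  have "be \<noteq> 0"
  proof
    assume "be = 0"
    hence "de = ga" unfolding be_def using two by simp
    hence "om = wq" unfolding de_def ga_def by simp
    hence "om ^ 2 = 1" using owq by (simp add: power2_eq_square)
    hence "om = 1 \<or> om = -1" by (simp add: power2_eq_1_iff)
    thus False using om(2) omn by simp
  qed
  hence "v0 \<noteq> 0" using v0 by auto
  moreover have "(0 + a0) ^ d - (-1) * 0 ^ d = a0 ^ d" using d_pos by simp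
  ultimately show ?thesis using G by blast
qed

end


context ffs begin

lemma neg1: "(-1::'a) \<noteq> 1"
proof
  assume "(-1::'a) = 1"
  hence "(2::'a) = 0" by (metis add.inverse_inverse one_add_one neg_eq_iff_add_eq_0)
  thus False using two_ne0A by simp
qed

lemma two_elems:
  assumes "{u, w} \<subseteq> {x::'a. (x + a) ^ d - (-1) * x ^ d = b}" "u \<noteq> w"
  shows "c_diff_count (\<lambda>x::'a. x ^ d) (-1) a b \<ge> 2"
proof -
  have fin: "finite {x::'a. (x + a) ^ d - (-1) * x ^ d = b}" by simp
  have "card {u, w} \<le> card {x::'a. (x + a) ^ d - (-1) * x ^ d = b}"
    using card_mono[OF fin assms(1)] .
  moreover have "card {u, w} = 2" using assms(2) by simp
  ultimately show ?thesis unfolding c_diff_count_def by simp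
qed

lemma odd_case:
  assumes "odd (k div gcd k n)"
  shows "\<exists>a b. c_diff_count (\<lambda>x::'a. x ^ d) (-1) a b \<ge> 2"
proof (cases "even d")
  case True
  have "(0::'a) \<noteq> -1" by simp
  from two_elems[OF case_even_d[OF True] this] show ?thesis by blast
next
  case False
  define E where "E = (p ^ gcd k n + 1) div 2"
  have Ed: "E dvd d" and E2: "E \<ge> 2"
    using nt_odd[OF pp po k0 n0 assms] unfolding E_def by auto
  show ?thesis
  proof (cases "even (n div gcd k n)")
    case True
    have "E dvd q - 1" using nt_odd(2)[OF pp po k0 n0 assms True] unfolding E_def by simp
    then obtain w :: 'a where w: "w ^ d = 1" "w \<noteq> 1" using case_B1[OF Ed _ E2] by blast
    have S: "{1, w} \<subseteq> {x::'a. (x + 0) ^ d - (-1) * x ^ d = 1 + 1}" using w by auto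
    have "1 \<noteq> w" using w(2) by auto
    from two_elems[OF S this] show ?thesis by blast
  next
    case odd: False
    have "E dvd q + 1" using nt_odd(3)[OF pp po k0 n0 assms odd] unfolding E_def by simp
    then obtain a0 v0 :: 'a where v: "v0 \<noteq> 0" and S: "{0, v0} \<subseteq> {x. (x + a0) ^ d - (-1) * x ^ d = a0 ^ d}"
      using case_B2[OF Ed _ E2 False] by blast
    have "0 \<noteq> v0" using v by auto
    from two_elems[OF S this] show ?thesis by blast
  qed
qed

lemma even_case_le:
  assumes "even (k div gcd k n)"
  shows "c_diff_count (\<lambda>x::'a. x ^ d) (-1) a b \<le> 1"
proof -
  note nt = nt_even[OF pp po k0 n0 assms]
  define A where "A = {x::'a. (x + a) ^ d - (-1) * x ^ d = b}"
  have h: "\<forall>x\<in>A. \<forall>y\<in>A. x = y"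
  proof (intro ballI)
    fix x y assume "x \<in> A" "y \<in> A"
    hence G: "(x + a) ^ d + x ^ d = (y + a) ^ d + y ^ d" unfolding A_def by simp
    show "x = y"
    proof (cases "a = 0")
      case True
      have "x ^ d + x ^ d = y ^ d + y ^ d" using G unfolding True by (simp only: add_0_right)
      thus ?thesis by (rule inj_zero[OF nt(2)])
    next
      case False
      show ?thesis by (rule inj_main[OF nt(2) nt(3) nt(1) False G])
    qed
  qed
  have fin: "finite A" by simp
  have "card A \<le> Suc 0" using card_le_Suc0_iff_eq[OF fin] h by blast
  thus ?thesis unfolding c_diff_count_def A_def by simp
qed

lemma count00: "c_diff_count (\<lambda>x::'a. x ^ d) (-1) 0 0 = 1"
proof -
  have h: "(x + 0) ^ d - (-1) * x ^ d = 0 \<longleftrightarrow> x = 0" for x :: 'a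
  proof
    assume "(x + 0) ^ d - (-1) * x ^ d = 0"
    hence "x ^ d + x ^ d = 0" by simp
    hence "2 * x ^ d = 0" by (simp only: mult_2)
    thus "x = 0" using two_ne0A by simp
  next
    assume "x = 0" thus "(x + 0) ^ d - (-1) * x ^ d = 0" using d_pos by (simp add: zero_power)
  qed
  have "{x::'a. (x + 0) ^ d - (-1) * x ^ d = 0} = {0}" using h by blast
  thus ?thesis unfolding c_diff_count_def by simp
qed

lemma main_iff:
  "perfect_c_nonlinear (\<lambda>x::'a. x ^ d) (-1) \<longleftrightarrow> even (k div gcd k n)"
proof -
  define f where "f = (\<lambda>a b. c_diff_count (\<lambda>x::'a. x ^ d) (-1) a b)"
  define S where "S = {c_diff_count (\<lambda>x::'a. x ^ d) (-1) a b | a b. a \<noteq> 0 \<or> (-1::'a) \<noteq> 1}"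
  have memS: "f a b \<in> S" for a b unfolding S_def f_def using neg1 by blast
  have inS: "y \<in> S \<Longrightarrow> \<exists>a b. y = f a b" for y unfolding S_def f_def by blast
  have sub: "S \<subseteq> {..card (UNIV :: 'a set)}"
  proof
    fix y assume "y \<in> S"
    then obtain a b where "y = f a b" using inS by blast
    hence "y \<le> card (UNIV :: 'a set)" unfolding f_def c_diff_count_def by (simp add: card_mono)
    thus "y \<in> {..card (UNIV :: 'a set)}" by simp
  qed
  have fin: "finite S" using finite_subset[OF sub] by simp
  have pc: "perfect_c_nonlinear (\<lambda>x::'a. x ^ d) (-1) \<longleftrightarrow> Max S = 1"
    unfolding perfect_c_nonlinear_def c_diff_uniformity_def S_def ..
  show ?thesis
  proof (cases "even (k div gcd k n)")
    case True
    have "Max S = 1"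
    proof (rule Max_eqI[OF fin])
      fix y assume "y \<in> S"
      then obtain a b where "y = f a b" using inS by blast
      thus "y \<le> 1" unfolding f_def using even_case_le[OF True] by simp
    next
      show "1 \<in> S" using memS[of 0 0] count00 unfolding f_def by simp
    qed
    thus ?thesis using pc True by simp
  next
    case False
    then obtain a b where ab: "f a b \<ge> 2" using odd_case unfolding f_def by blast
    have "Max S \<ge> f a b" using Max_ge[OF fin memS] .
    hence "Max S \<ge> 2" using ab by simp
    thus ?thesis using pc False by simp
  qed
qed

end

theorem theorem3:
  fixes p n k :: nat
  assumes "prime p" and "odd p" and "n > 0" and "k > 0"
    and "card (UNIV :: 'a::{field,finite} set) = p ^ n"
  shows "perfect_c_nonlinear (\<lambda>x::'a. x ^ ((p ^ k + 1) div 2)) (-1)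
         \<longleftrightarrow> even (k div gcd k n)"
proof -
  interpret ffs p n k "TYPE('a)" using assms by unfold_locales
  show ?thesis by (rule main_iff)
qed


end
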